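(* Let $\lambda=(n,k,k-1,\dots,1)$ with integers $n\ge k\ge 1$. (i) If $n-k$ is odd, then all roots of $\mathrm{He}_\lambda(x)$ are real, the non-zero roots are simple, and there are exactly $n-k-1$ non-zero roots. (ii) If $n-k$ is even, then all non-zero roots of $\mathrm{He}_\lambda(x)$ are simple; exactly $n-k$ of them are real and exactly $2k$ are non-real complex numbers.
   Context: $\mathrm{He}_j(x)$ denotes the monic probabilists' Hermite polynomial of degree $j$. For a partition $\lambda=(\lambda_1\ge\dots\ge\lambda_r\ge0)$ the degree sequence is $n_\lambda=(\lambda_r,\lambda_{r-1}+1,\dots,\lambda_1+r-1)$, $\Delta(x_1,\dots,x_r)=\prod_{i<j}(x_j-x_i)$, and $\mathrm{He}_\lambda(x)=\mathrm{Wr}[\mathrm{He}_{n_1},\dots,\mathrm{He}_{n_r}]/\Delta(n_\lambda)$ with $n_\lambda=(n_1,\dots,n_r)$; it is a monic polynomial of degree $|\lambda|$. *)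

theory Defs
  imports "HOL-Computational_Algebra.Polynomial" "HOL-Combinatorics.Permutations" Complex_Main
begin

fun hermite_He :: "nat \<Rightarrow> real poly" where
  "hermite_He 0 = 1"
| "hermite_He (Suc 0) = [:0, 1:]"
| "hermite_He (Suc (Suc j)) = [:0, 1:] * hermite_He (Suc j) - smult (real (Suc j)) (hermite_He j)"

definition det_fun :: "nat \<Rightarrow> (nat \<Rightarrow> nat \<Rightarrow> 'a::comm_ring_1) \<Rightarrow> 'a" where
  "det_fun r M = (\<Sum>p | p permutes {..<r}. of_int (sign p) * (\<Prod>i<r. M i (p i)))"

definition wronskian :: "real poly list \<Rightarrow> real poly" where
  "wronskian fs = det_fun (length fs) (\<lambda>i j. (pderiv ^^ i) (fs ! j))"

definition degree_seq :: "nat list \<Rightarrow> nat list" where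
  "degree_seq lam = map (\<lambda>j. lam ! (length lam - 1 - j) + j) [0..<length lam]"

definition vandermonde :: "nat list \<Rightarrow> real" where
  "vandermonde xs = (\<Prod>j<length xs. \<Prod>i<j. real (xs ! j) - real (xs ! i))"

definition hermite_partition :: "nat list \<Rightarrow> real poly" where
  "hermite_partition lam =
     smult (1 / vandermonde (degree_seq lam)) (wronskian (map hermite_He (degree_seq lam)))"

end

theory Submission
  imports Defs "Jordan_Normal_Form.Determinant" "HOL-Computational_Algebra.Fundamental_Theorem_Algebra"
begin

lemma X_mult: "[:0,1:] * (p::'a::comm_ring_1 poly) = pCons 0 p" by (simp add: mult_pCons_left)

lemma he_pderiv_aux:
  "pderiv (hermite_He (Suc n)) = Polynomial.smult (real (Suc n)) (hermite_He n) \<and>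
   pderiv (hermite_He (Suc (Suc n))) = Polynomial.smult (real (Suc (Suc n))) (hermite_He (Suc n))"
proof (induction n)
  case 0
  show ?case by (simp add: pderiv_mult pderiv_pCons X_mult numeral_2_eq_2)
next
  case (Suc n)
  then have ih: "pderiv (hermite_He (Suc (Suc n))) = Polynomial.smult (real (Suc (Suc n))) (hermite_He (Suc n))"
    and ih2: "pderiv (hermite_He (Suc n)) = Polynomial.smult (real (Suc n)) (hermite_He n)" by auto
  have "pderiv (hermite_He (Suc (Suc (Suc n)))) =
     hermite_He (Suc (Suc n)) + [:0,1:] * Polynomial.smult (real (Suc (Suc n))) (hermite_He (Suc n))
      - Polynomial.smult (real (Suc (Suc n))) (Polynomial.smult (real (Suc n)) (hermite_He n))"
    by (simp only: hermite_He.simps(3)[of "Suc n"] pderiv_diff pderiv_mult pderiv_smult ih ih2) (simp add: pderiv_pCons)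
  also have "\<dots> = hermite_He (Suc (Suc n)) + Polynomial.smult (real (Suc (Suc n))) (hermite_He (Suc (Suc n)))"
    by (simp only: hermite_He.simps(3)[of n]) (simp add: algebra_simps smult_diff_right)
  also have "\<dots> = Polynomial.smult (real (Suc (Suc (Suc n)))) (hermite_He (Suc (Suc n)))"
    using smult_add_left[of 1 "real (Suc (Suc n))" "hermite_He (Suc (Suc n))"] by (simp del: hermite_He.simps)
  finally show ?case using ih by simp
qed

lemma he_pderiv: "pderiv (hermite_He (Suc n)) = Polynomial.smult (real (Suc n)) (hermite_He n)"
  using he_pderiv_aux by blast

lemma he_rec: "hermite_He (Suc n) = [:0,1:] * hermite_He n - pderiv (hermite_He n)"
proof (cases n)
  case 0 then show ?thesis by simp
next
  case (Suc m) then show ?thesis by (simp add: he_pderiv)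
qed

lemma he_coeff: "(n < m \<longrightarrow> coeff (hermite_He n) m = 0) \<and> (odd (n + m) \<longrightarrow> coeff (hermite_He n) m = 0)
   \<and> coeff (hermite_He n) n = 1"
proof (induction n arbitrary: m rule: hermite_He.induct)
  case 1 then show ?case by (auto simp add: coeff_1 odd_pos)
next
  case 2 then show ?case by (cases m) (auto simp: coeff_pCons odd_pos split: nat.splits)
next
  case (3 j)
  note ih1 = "3.IH"(1) and ih2 = "3.IH"(2)
  have c: "coeff (hermite_He (Suc (Suc j))) m' = (case m' of 0 \<Rightarrow> 0 | Suc t \<Rightarrow> coeff (hermite_He (Suc j)) t)
     - real (Suc j) * coeff (hermite_He j) m'" for m'
    by (simp add: X_mult coeff_pCons)
  show ?case
  proof (intro conjI impI)
    assume "Suc (Suc j) < m"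
    then show "coeff (hermite_He (Suc (Suc j))) m = 0" using ih1[of "m - 1"] ih2[of m]
      by (cases m) (auto simp: c)
  next
    assume "odd (Suc (Suc j) + m)"
    then show "coeff (hermite_He (Suc (Suc j))) m = 0" using ih1[of "m - 1"] ih2[of m]
      by (cases m) (auto simp: c)
  next
    show "coeff (hermite_He (Suc (Suc j))) (Suc (Suc j)) = 1" using ih1[of "Suc j"] ih2[of "Suc (Suc j)"]
      by (auto simp: c)
  qed
qed

lemma he_ode: "pderiv (pderiv (hermite_He n)) = [:0,1:] * pderiv (hermite_He n) - Polynomial.smult (real n) (hermite_He n)"
proof -
  have "pderiv (hermite_He (Suc n)) = hermite_He n + [:0,1:] * pderiv (hermite_He n) - pderiv (pderiv (hermite_He n))"
    by (subst he_rec) (simp add: pderiv_diff pderiv_mult pderiv_pCons)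
  then have "Polynomial.smult (real (Suc n)) (hermite_He n) = hermite_He n + [:0,1:] * pderiv (hermite_He n) - pderiv (pderiv (hermite_He n))"
    by (simp add: he_pderiv)
  then show ?thesis by (simp add: algebra_simps smult_add_left)
qed

lemma he_coeff_rec: "real (m+2) * real (m+1) * coeff (hermite_He n) (m+2) = (real m - real n) * coeff (hermite_He n) m"
proof -
  have "coeff (pderiv (pderiv (hermite_He n))) m = coeff ([:0,1:] * pderiv (hermite_He n) - Polynomial.smult (real n) (hermite_He n)) m"
    by (simp only: he_ode)
  then show ?thesis
    by (cases m) (auto simp: coeff_pderiv X_mult algebra_simps)
qed

definition ev :: "real poly \<Rightarrow> real poly \<Rightarrow> real poly" where
  "ev p g = Poly (map (\<lambda>m. poly p (real m) * coeff g m) [0..<Suc (degree g)])"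

lemma coeff_ev: "coeff (ev p g) m = poly p (real m) * coeff g m"
proof (cases "m \<le> degree g")
  case True
  then show ?thesis unfolding ev_def by (simp add: nth_default_def del: upt_Suc)
next
  case False
  then show ?thesis unfolding ev_def by (simp add: nth_default_def coeff_eq_0 del: upt_Suc)
qed

definition ffp :: "nat \<Rightarrow> real poly" where "ffp i = (\<Prod>s<i. [:-real s, 1:])"
definition pip :: "nat \<Rightarrow> real poly" where "pip i = (\<Prod>s<i. [:-real (2*s+1), 1:])"

lemma poly_ffp: "poly (ffp i) x = (\<Prod>s<i. x - real s)"
  unfolding ffp_def by (simp add: poly_prod)
lemma poly_pip: "poly (pip i) x = (\<Prod>s<i. x - real (2*s+1))"
  unfolding pip_def poly_prod by (intro prod.cong) (auto simp: algebra_simps)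

lemma degree_ffp: "degree (ffp i) = i" and lead_ffp: "coeff (ffp i) i = 1"
proof -
  have "degree (ffp i) = (\<Sum>s<i. degree [:-real s, 1:])" unfolding ffp_def
    by (rule degree_prod_eq_sum_degree) auto
  then show d: "degree (ffp i) = i" by simp
  have "lead_coeff (ffp i) = 1" unfolding ffp_def lead_coeff_prod by simp
  then show "coeff (ffp i) i = 1" using d by simp
qed

lemma degree_pip: "degree (pip i) = i" and lead_pip: "coeff (pip i) i = 1"
proof -
  have "degree (pip i) = (\<Sum>s<i. degree [:-real (2*s+1), 1:])" unfolding pip_def
    by (rule degree_prod_eq_sum_degree) auto
  then show d: "degree (pip i) = i" by simp
  have "lead_coeff (pip i) = 1" unfolding pip_def lead_coeff_prod by simp
  then show "coeff (pip i) i = 1" using d by simp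
qed

lemma ffp_poch: "m \<ge> i \<Longrightarrow> pochhammer (real (Suc (m - i))) i = (\<Prod>s<i. real m - real s)"
proof (induction i)
  case 0 then show ?case by simp
next
  case (Suc i)
  have "pochhammer (real (Suc (m - Suc i))) (Suc i) = real (Suc (m - Suc i)) * pochhammer (real (Suc (m - Suc i)) + 1) i"
    by (simp add: pochhammer_rec)
  also have "real (Suc (m - Suc i)) + 1 = real (Suc (m - i))" using Suc.prems by simp
  also have "pochhammer (real (Suc (m - i))) i = (\<Prod>s<i. real m - real s)" using Suc by simp
  finally show ?case using Suc.prems by (simp add: of_nat_diff)
qed

lemma monom_higher_pderiv: "monom 1 i * (pderiv ^^ i) g = ev (ffp i) g"
proof (rule poly_eqI)
  fix m
  show "coeff (monom 1 i * (pderiv ^^ i) g) m = coeff (ev (ffp i) g) m"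
  proof (cases "m < i")
    case True
    then have "poly (ffp i) (real m) = 0" unfolding poly_ffp using True by (simp add: prod_zero_iff)
    then show ?thesis using True by (simp add: coeff_monom_mult coeff_ev)
  next
    case False
    then have "pochhammer (real (Suc (m - i))) i = (\<Prod>s<i. real m - real s)" by (intro ffp_poch) simp
    then show ?thesis using False by (simp add: coeff_monom_mult coeff_ev coeff_higher_pderiv poly_ffp)
  qed
qed

lemma poly_altdef_lt: "degree (p::real poly) < r \<Longrightarrow> poly p x = (\<Sum>l\<in>{0..<r}. coeff p l * x ^ l)"
proof -
  assume d: "degree p < r"
  have "poly p x = (\<Sum>l\<le>degree p. coeff p l * x ^ l)" by (simp add: poly_altdef)
  also have "\<dots> = (\<Sum>l\<in>{0..<r}. coeff p l * x ^ l)"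
    by (rule sum.mono_neutral_left) (use d in \<open>auto simp: coeff_eq_0\<close>)
  finally show ?thesis .
qed

lemma ev_expand: "degree p < r \<Longrightarrow> ev p g = (\<Sum>l\<in>{0..<r}. [:coeff p l:] * ev (monom 1 l) g)"
proof (rule poly_eqI)
  fix m assume d: "degree p < r"
  have "coeff (\<Sum>l\<in>{0..<r}. [:coeff p l:] * ev (monom 1 l) g) m = (\<Sum>l\<in>{0..<r}. coeff p l * (real m ^ l * coeff g m))"
    by (simp add: coeff_sum coeff_ev poly_monom)
  also have "\<dots> = (\<Sum>l\<in>{0..<r}. coeff p l * real m ^ l) * coeff g m"
    by (simp add: sum_distrib_right mult.assoc)
  also have "\<dots> = coeff (ev p g) m" using poly_altdef_lt[OF d] by (simp add: coeff_ev)
  finally show "coeff (ev p g) m = coeff (\<Sum>l\<in>{0..<r}. [:coeff p l:] * ev (monom 1 l) g) m" by simp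
qed

definition pmat :: "nat \<Rightarrow> (nat \<Rightarrow> real poly) \<Rightarrow> (nat \<Rightarrow> real poly) \<Rightarrow> real poly mat" where
  "pmat r p g = mat r r (\<lambda>(i,j). ev (p i) (g j))"

lemma det_pmat_tri:
  assumes "\<And>i. i < r \<Longrightarrow> degree (p i) \<le> i \<and> coeff (p i) i = 1"
  shows "det (pmat r p g) = det (pmat r (\<lambda>i. monom 1 i) g)"
proof -
  define L where "L = mat r r (\<lambda>(i,l). [:coeff (p i) l:])"
  have L: "L \<in> carrier_mat r r" unfolding L_def by simp
  have eq: "pmat r p g = L * pmat r (\<lambda>i. monom 1 i) g"
  proof (rule eq_matI)
    fix i j assume ij: "i < dim_row (L * pmat r (\<lambda>i. monom 1 i) g)" "j < dim_col (L * pmat r (\<lambda>i. monom 1 i) g)"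
    then have i: "i < r" and j: "j < r" by (auto simp: L_def pmat_def)
    have "degree (p i) < r" using assms[OF i] i by linarith
    then show "pmat r p g $$ (i, j) = (L * pmat r (\<lambda>i. monom 1 i) g) $$ (i, j)"
      using i j by (simp add: pmat_def L_def scalar_prod_def ev_expand)
  qed (auto simp: L_def pmat_def)
  have "det L = 1"
  proof -
    have "det L = prod_list (diag_mat L)"
    proof (rule det_lower_triangular[OF _ L])
      fix i j assume ij: "i < j" "j < r"
      then have "degree (p i) < j" using assms[of i] by linarith
      then show "L $$ (i, j) = 0" using ij by (simp add: L_def coeff_eq_0)
    qed
    also have "diag_mat L = map (\<lambda>_. 1) [0..<r]" unfolding diag_mat_def L_def using assms
      by (auto simp: one_pCons)
    finally show ?thesis by (simp add: map_replicate_const)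
  qed
  then show ?thesis unfolding eq by (subst det_mult[OF L]) (auto simp: pmat_def)
qed

lemma det_pmat_step:
  assumes "degree q = r" "coeff q r = 1" "\<And>j. j < r \<Longrightarrow> ev q (g j) = 0"
  shows "det (pmat (Suc r) (\<lambda>i. monom 1 i) g) = ev q (g r) * det (pmat r (\<lambda>i. monom 1 i) g)"
proof -
  define p where "p = (\<lambda>i. if i = r then q else monom (1::real) i)"
  define A where "A = pmat (Suc r) p g"
  have A: "A \<in> carrier_mat (Suc r) (Suc r)" unfolding A_def pmat_def by simp
  have "det (pmat (Suc r) (\<lambda>i. monom 1 i) g) = det A" unfolding A_def
    by (rule det_pmat_tri[symmetric]) (auto simp: p_def degree_monom_eq assms)
  also have "\<dots> = (\<Sum>j<Suc r. A $$ (r,j) * cofactor A r j)"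
    by (rule laplace_expansion_row[OF A]) simp
  also have "\<dots> = (\<Sum>j<r. A $$ (r,j) * cofactor A r j) + A $$ (r,r) * cofactor A r r"
    by simp
  also have "(\<Sum>j<r. A $$ (r,j) * cofactor A r j) = 0"
    using assms(3) by (intro sum.neutral) (simp add: A_def pmat_def p_def)
  also have "0 + A $$ (r,r) * cofactor A r r = A $$ (r,r) * cofactor A r r" by simp
  also have "mat_delete A r r = pmat r (\<lambda>i. monom 1 i) g"
    by (rule eq_matI) (auto simp: mat_delete_def A_def pmat_def p_def)
  then have "cofactor A r r = det (pmat r (\<lambda>i. monom 1 i) g)"
    unfolding cofactor_def by simp
  finally show ?thesis by (simp add: A_def pmat_def p_def)
qed

lemma det_fun_det: "det_fun r M = det (mat r r (\<lambda>(i,j). M i j))"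
proof -
  have "det (mat r r (\<lambda>(i,j). M i j)) = (\<Sum>p | p permutes {0..<r}. of_int (sign p) * (\<Prod>i = 0..<r. mat r r (\<lambda>(i,j). M i j) $$ (i, p i)))"
    by (rule det_def') simp
  also have "\<dots> = (\<Sum>p | p permutes {0..<r}. of_int (sign p) * (\<Prod>i = 0..<r. M i (p i)))"
  proof (intro sum.cong refl arg_cong2[where f="(*)"] prod.cong)
    fix p i assume "p \<in> {p. p permutes {0..<r}}" "i \<in> {0..<r}"
    then have "p i < r" using permutes_in_image by fastforce
    then show "mat r r (\<lambda>(i,j). M i j) $$ (i, p i) = M i (p i)" using \<open>i \<in> _\<close> by simp
  qed
  finally show ?thesis unfolding det_fun_def by (simp add: lessThan_atLeast0)
qed

lemma wr_pmat: "(\<Prod>i<r. monom 1 i) * det_fun r (\<lambda>i j. (pderiv ^^ i) (g j)) = det (pmat r (\<lambda>i. monom 1 i) g)"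
proof -
  have "det (pmat r (\<lambda>i. monom 1 i) g) = det (pmat r ffp g)"
    by (rule det_pmat_tri[symmetric]) (simp add: degree_ffp lead_ffp)
  also have "pmat r ffp g = mat r r (\<lambda>(i,j). monom 1 i * (pderiv ^^ i) (g j))"
    unfolding pmat_def by (simp add: monom_higher_pderiv)
  also have "det \<dots> = det_fun r (\<lambda>i j. monom 1 i * (pderiv ^^ i) (g j))"
    by (simp add: det_fun_det)
  also have "\<dots> = (\<Prod>i<r. monom 1 i) * det_fun r (\<lambda>i j. (pderiv ^^ i) (g j))"
    unfolding det_fun_def sum_distrib_left prod.distrib by (simp only: mult.left_commute)
  finally show ?thesis by simp
qed

lemma he_coeff_nz: "coeff (hermite_He n) m \<noteq> 0 \<Longrightarrow> m \<le> n \<and> even (n + m)"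
  using he_coeff[of n m] by (auto simp: not_less)

lemma ev_pip_odd: "j < s \<Longrightarrow> ev (pip s) (hermite_He (2*j+1)) = 0"
proof (rule poly_eqI)
  fix m assume js: "j < s"
  show "coeff (ev (pip s) (hermite_He (2*j+1))) m = coeff 0 m"
  proof (cases "coeff (hermite_He (2*j+1)) m = 0")
    case False
    then have "m \<le> 2*j+1" "even (2*j+1+m)" using he_coeff_nz by blast+
    note mm = this
    define t where "t = m div 2"
    have t1: "m = 2*t+1" using mm(2) unfolding t_def by presburger
    have t2: "t \<le> j" using mm(1) t1 by linarith
    note t = t1 t2
    then have "poly (pip s) (real m) = 0" unfolding poly_pip using js
      by (simp add: prod_zero_iff)
    then show ?thesis by (simp add: coeff_ev)
  qed (simp add: coeff_ev)
qed

lemma ev_pip_same: "ev (pip s) (hermite_He (2*s+1)) = monom (poly (pip s) (real (2*s+1))) (2*s+1)"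
proof (rule poly_eqI)
  fix m
  show "coeff (ev (pip s) (hermite_He (2*s+1))) m = coeff (monom (poly (pip s) (real (2*s+1))) (2*s+1)) m"
  proof (cases "coeff (hermite_He (2*s+1)) m = 0")
    case False
    then have "m \<le> 2*s+1" "even (2*s+1+m)" using he_coeff_nz by blast+
    note mm = this
    define t where "t = m div 2"
    have t1: "m = 2*t+1" using mm(2) unfolding t_def by presburger
    have t2: "t \<le> s" using mm(1) t1 by linarith
    note t = t1 t2
    show ?thesis
    proof (cases "t = s")
      case True
      then show ?thesis using t he_coeff[of "2*s+1" "2*s+1"] by (simp add: coeff_ev coeff_monom)
    next
      case False
      then have "poly (pip s) (real m) = 0" unfolding poly_pip using t
        by (simp add: prod_zero_iff)
      then show ?thesis using t False by (simp add: coeff_ev coeff_monom)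
    qed
  next
    case True
    then show ?thesis using he_coeff[of "2*s+1" "2*s+1"] by (auto simp: coeff_ev coeff_monom)
  qed
qed

lemma ev_pip_odd': "j < s \<Longrightarrow> ev (pip s) (hermite_He (Suc (2*j))) = 0"
  using ev_pip_odd by simp
lemma ev_pip_same': "ev (pip s) (hermite_He (Suc (2*s))) = monom (poly (pip s) (real (Suc (2*s)))) (Suc (2*s))"
  using ev_pip_same by simp

definition gk :: "nat \<Rightarrow> nat \<Rightarrow> nat \<Rightarrow> real poly" where
  "gk k N j = (if j < k then hermite_He (2*j+1) else hermite_He N)"

lemma det_odd: "s \<le> k \<Longrightarrow> det (pmat s (\<lambda>i. monom 1 i) (gk k N)) =
    (\<Prod>t<s. monom (poly (pip t) (real (2*t+1))) (2*t+1))"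
proof (induction s)
  case 0
  then show ?case by (simp add: pmat_def)
next
  case (Suc s)
  have "det (pmat (Suc s) (\<lambda>i. monom 1 i) (gk k N)) = ev (pip s) (gk k N s) * det (pmat s (\<lambda>i. monom 1 i) (gk k N))"
    by (rule det_pmat_step) (use Suc.prems in \<open>auto simp: degree_pip lead_pip gk_def ev_pip_odd'\<close>)
  also have "gk k N s = hermite_He (2*s+1)" using Suc.prems by (simp add: gk_def)
  also have "ev (pip s) (hermite_He (2*s+1)) = monom (poly (pip s) (real (2*s+1))) (2*s+1)" by (rule ev_pip_same)
  also have "det (pmat s (\<lambda>i. monom 1 i) (gk k N)) = (\<Prod>t<s. monom (poly (pip t) (real (2*t+1))) (2*t+1))"
    using Suc by simp
  also have "monom (poly (pip s) (real (2*s+1))) (2*s+1) * (\<Prod>t<s. monom (poly (pip t) (real (2*t+1))) (2*t+1))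
     = (\<Prod>t<Suc s. monom (poly (pip t) (real (2*t+1))) (2*t+1))"
    by (subst prod.lessThan_Suc) (rule mult.commute)
  finally show ?case .
qed

lemma det_full: "det (pmat (Suc k) (\<lambda>i. monom 1 i) (gk k N)) =
    ev (pip k) (hermite_He N) * (\<Prod>t<k. monom (poly (pip t) (real (2*t+1))) (2*t+1))"
proof -
  have "det (pmat (Suc k) (\<lambda>i. monom 1 i) (gk k N)) = ev (pip k) (gk k N k) * det (pmat k (\<lambda>i. monom 1 i) (gk k N))"
    by (rule det_pmat_step) (auto simp: degree_pip lead_pip gk_def ev_pip_odd')
  then show ?thesis by (simp add: det_odd gk_def)
qed

lemma prod_monom: "finite A \<Longrightarrow> (\<Prod>i\<in>A. monom (a i) (b i)) = monom (\<Prod>i\<in>A. a i) (\<Sum>i\<in>A. b i)"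
  by (induction A rule: finite_induct) (auto simp: mult_monom)

lemma det_fun_cong: "(\<And>i j. i < r \<Longrightarrow> j < r \<Longrightarrow> M i j = M' i j) \<Longrightarrow> det_fun r M = det_fun r M'"
  unfolding det_fun_def
proof (intro sum.cong refl arg_cong2[where f="(*)"] prod.cong)
  fix p i assume h: "\<And>i j. i < r \<Longrightarrow> j < r \<Longrightarrow> M i j = M' i j" "p \<in> {p. p permutes {..<r}}" "i \<in> {..<r}"
  then have "p i < r" using permutes_in_image by fastforce
  then show "M i (p i) = M' i (p i)" using h by simp
qed

lemma degree_seq_lam: "degree_seq (n # rev [1..<k+1]) = map (\<lambda>j. if j < k then 2*j+1 else n+k) [0..<Suc k]"
proof (rule nth_equalityI)
  show "length (degree_seq (n # rev [1..<k+1])) = length (map (\<lambda>j. if j < k then 2*j+1 else n+k) [0..<Suc k])"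
    by (simp add: degree_seq_def)
next
  fix j assume "j < length (degree_seq (n # rev [1..<k+1]))"
  then have j: "j < Suc k" by (simp add: degree_seq_def del: upt_Suc)
  show "degree_seq (n # rev [1..<k+1]) ! j = map (\<lambda>j. if j < k then 2*j+1 else n+k) [0..<Suc k] ! j"
  proof (cases "j < k")
    case True
    then have "(n # rev [1..<k+1]) ! (k - j) = rev [1..<k+1] ! (k - j - 1)"
      by (simp add: nth_Cons' del: upt_Suc)
    also have "\<dots> = [1..<k+1] ! (length [1..<k+1] - Suc (k - j - 1))"
      by (rule rev_nth) (use True in \<open>simp del: upt_Suc\<close>)
    also have "\<dots> = j + 1" using True by (simp del: upt_Suc)
    finally show ?thesis using True j by (simp add: degree_seq_def nth_append del: upt_Suc)
  next
    case False
    then have "j = k" using j by simp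
    then show ?thesis by (simp add: degree_seq_def nth_append del: upt_Suc)
  qed
qed

lemma vandermonde_nz: assumes "\<And>i j. i < j \<Longrightarrow> j < length xs \<Longrightarrow> xs ! i < xs ! j"
  shows "vandermonde xs \<noteq> 0"
  unfolding vandermonde_def by (auto simp: prod_zero_iff) (metis assms less_irrefl)

lemma sum_le_odd: "(\<Sum>i<Suc k. i) \<le> (\<Sum>t<k. 2*t+1)"
  by (induction k) auto

lemma hp_formula:
  assumes "1 \<le> k" "k \<le> n"
  shows "\<exists>c e. c \<noteq> 0 \<and> hermite_partition (n # rev [1..<k+1]) = monom c e * ev (pip k) (hermite_He (n+k))"
proof -
  define N where "N = n + k"
  define ds where "ds = degree_seq (n # rev [1..<k+1])"
  have ds: "ds = map (\<lambda>j. if j < k then 2*j+1 else n+k) [0..<Suc k]" unfolding ds_def by (rule degree_seq_lam)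
  define W where "W = wronskian (map hermite_He ds)"
  have len: "length (map hermite_He ds) = Suc k" by (simp add: ds)
  have W: "W = det_fun (Suc k) (\<lambda>i j. (pderiv ^^ i) (gk k N j))"
    unfolding W_def wronskian_def len
    by (rule det_fun_cong) (auto simp: ds gk_def N_def nth_append simp del: upt_Suc)
  define Q where "Q = ev (pip k) (hermite_He N)"
  define Cc where "Cc = (\<Prod>t<k. poly (pip t) (real (2*t+1)))"
  define E where "E = (\<Sum>i<Suc k. i)"
  define F where "F = (\<Sum>t<k. 2*t+1)"
  have EF: "E \<le> F" unfolding E_def F_def by (rule sum_le_odd)
  have pm: "(\<Prod>i<Suc k. monom (1::real) i) = monom 1 E" unfolding E_def
    by (simp add: prod_monom del: sum.lessThan_Suc prod.lessThan_Suc)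
  have "monom 1 E * W = det (pmat (Suc k) (\<lambda>i. monom 1 i) (gk k N))"
    by (simp only: pm[symmetric] W wr_pmat)
  also have "\<dots> = Q * monom Cc F" unfolding det_full Q_def Cc_def F_def by (simp add: prod_monom)
  also have "\<dots> = monom 1 E * (monom Cc (F - E) * Q)" using EF by (simp add: mult_monom mult.commute)
  finally have W2: "W = monom Cc (F - E) * Q" by (simp add: monom_eq_0_iff)
  have Cc: "Cc \<noteq> 0" unfolding Cc_def poly_pip by (auto simp: prod_zero_iff)
  have V: "vandermonde ds \<noteq> 0"
    by (rule vandermonde_nz) (use assms in \<open>auto simp: ds nth_append simp del: upt_Suc\<close>)
  have "hermite_partition (n # rev [1..<k+1]) = Polynomial.smult (1 / vandermonde ds) W"
    unfolding hermite_partition_def ds_def W_def ..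
  also have "\<dots> = monom (Cc / vandermonde ds) (F - E) * Q" unfolding W2 by (simp add: smult_monom_mult)
  finally show ?thesis using Cc V unfolding Q_def N_def by (intro exI[of _ "Cc / vandermonde ds"] exI[of _ "F - E"]) auto
qed

lemma rolle_count:
  fixes S :: "real set"
  assumes "finite S" "S \<noteq> {}" "\<And>a b. a \<in> S \<Longrightarrow> b \<in> S \<Longrightarrow> a < b \<Longrightarrow> \<exists>t. a < t \<and> t < b \<and> P t"
  shows "\<exists>T. finite T \<and> card T = card S - 1 \<and> (\<forall>t\<in>T. P t \<and> Min S < t \<and> t < Max S)"
  using assms
proof (induction "card S" arbitrary: S)
  case 0
  then show ?case by simp
next
  case (Suc n S)
  show ?case
  proof (cases n)
    case 0
    then show ?thesis using Suc by (intro exI[of _ "{}"]) auto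
  next
    case (Suc n')
    define S' where "S' = S - {Max S}"
    have MS: "Max S \<in> S" using Suc.prems by simp
    have cS': "card S' = n" unfolding S'_def using Suc.hyps(2) Suc.prems MS by simp
    have fS'1: "finite S'" using Suc.prems unfolding S'_def by auto
    have fS'2: "S' \<noteq> {}" using cS' \<open>n = Suc n'\<close> by auto
    note fS' = fS'1 fS'2
    have sub: "S' \<subseteq> S" unfolding S'_def by auto
    obtain T' where T': "finite T'" "card T' = card S' - 1" "\<forall>t\<in>T'. P t \<and> Min S' < t \<and> t < Max S'"
      using Suc.hyps(1)[OF cS'[symmetric] fS'] Suc.prems(3) sub by blast
    have a: "Max S' \<in> S" using fS' sub Max_in by blast
    have "Max S' \<noteq> Max S" using fS' unfolding S'_def by (metis Max_in Diff_iff insertI1)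
    then have ab: "Max S' < Max S" using a Suc.prems by (simp add: order_neq_le_trans)
    obtain t where t: "Max S' < t" "t < Max S" "P t" using Suc.prems(3)[OF a MS ab] by blast
    have MinS: "Min S \<le> Min S'" using fS' sub Suc.prems by (intro Min_antimono) auto
    have MinS': "Min S' \<le> Max S'" using fS' by simp
    have tT: "t \<notin> T'" using T'(3) t by fastforce
    show ?thesis
    proof (rule exI[of _ "insert t T'"], intro conjI)
      show "finite (insert t T')" using T' by simp
      show "card (insert t T') = card S - 1" using T' tT cS' Suc.hyps(2) \<open>n = Suc n'\<close> by simp
      show "\<forall>x\<in>insert t T'. P x \<and> Min S < x \<and> x < Max S" using T'(3) t MinS MinS' ab by fastforce
    qed
  qed
qed

definition opx :: "nat \<Rightarrow> real poly \<Rightarrow> real poly" where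
  "opx c f = [:0,1:] * pderiv f - Polynomial.smult (real c) f"

lemma poly_opx: "poly (opx c f) x = x * poly (pderiv f) x - real c * poly f x"
  unfolding opx_def by simp

lemma coeff_opx: "coeff (opx c f) m = (real m - real c) * coeff f m"
  unfolding opx_def by (cases m) (auto simp: coeff_pderiv coeff_pCons mult_pCons_left algebra_simps)

lemma rolle_opx:
  assumes f: "f \<noteq> 0" and g: "opx c f \<noteq> 0"
  shows "card {x. 0 < x \<and> poly f x = 0} \<le> Suc (card {x. 0 < x \<and> poly (opx c f) x = 0})"
proof (cases "{x. 0 < x \<and> poly f x = 0} = {}")
  case True then show ?thesis by (simp only: True card.empty)
next
  case False
  define S where "S = {x. 0 < x \<and> poly f x = 0}"
  define G where "G = {x. 0 < x \<and> poly (opx c f) x = 0}"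
  have fS: "finite S" unfolding S_def using poly_roots_finite[OF f] by (rule rev_finite_subset) auto
  have fG: "finite G" unfolding G_def using poly_roots_finite[OF g] by (rule rev_finite_subset) auto
  have Sne: "S \<noteq> {}" using False unfolding S_def .
  have btw: "\<exists>t. a < t \<and> t < b \<and> poly (opx c f) t = 0" if ab: "a \<in> S" "b \<in> S" "a < b" for a b
  proof -
    define h where "h = (\<lambda>x. poly f x / x ^ c)"
    have a0: "0 < a" using ab unfolding S_def by auto
    have "h a = h b" using ab unfolding h_def S_def by auto
    moreover have "continuous_on {a..b} h" unfolding h_def using a0
      by (intro continuous_intros) auto
    moreover have "h differentiable (at x)" if "a < x" "x < b" for x
      unfolding h_def using that a0 by (intro derivative_intros) auto
    ultimately obtain z where z: "a < z" "z < b" "DERIV h z :> 0" using Rolle[OF ab(3)] by blast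
    have z0: "0 < z" using z a0 by simp
    have "DERIV h z :> (poly (pderiv f) z * z ^ c - poly f z * (real c * z ^ (c - 1))) / (z ^ c * z ^ c)"
      unfolding h_def using z0 by (auto intro!: derivative_eq_intros)
    then have "(poly (pderiv f) z * z ^ c - poly f z * (real c * z ^ (c - 1))) / (z ^ c * z ^ c) = 0"
      using DERIV_unique[OF _ z(3)] by blast
    then have e: "poly (pderiv f) z * z ^ c = poly f z * (real c * z ^ (c - 1))" using z0 by (simp add: divide_eq_0_iff)
    have "z * z ^ (c - 1) = z ^ c" if "c > 0" using that by (cases c) auto
    then have "(z * poly (pderiv f) z - real c * poly f z) * z ^ c = 0"
    proof (cases "c = 0")
      case True then show ?thesis using e by simp
    next
      case False
      then have "z * (poly f z * (real c * z ^ (c - 1))) = real c * poly f z * z ^ c"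
        using \<open>c > 0 \<Longrightarrow> z * z ^ (c - 1) = z ^ c\<close> by (simp add: mult.commute mult.left_commute)
      then show ?thesis using e by (simp add: left_diff_distrib mult.assoc mult.left_commute)
    qed
    then have "poly (opx c f) z = 0" using z0 by (simp add: poly_opx)
    then show ?thesis using z by blast
  qed
  obtain T where T: "finite T" "card T = card S - 1" "\<forall>t\<in>T. poly (opx c f) t = 0 \<and> Min S < t \<and> t < Max S"
    using rolle_count[OF fS Sne btw] by blast
  have "Min S \<in> S" using fS Sne by (rule Min_in)
  then have Smin: "0 < Min S" unfolding S_def by simp
  have "T \<subseteq> G" using T(3) Smin unfolding G_def by force
  then have "card T \<le> card G" using fG by (rule card_mono[rotated])
  then show ?thesis using T(2) unfolding S_def G_def by linarith
qed

lemma he_ne0: "hermite_He n \<noteq> 0"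
  using he_coeff[of n n] by auto

lemma he_degree: "degree (hermite_He n) = n"
proof (rule antisym)
  show "degree (hermite_He n) \<le> n" by (rule degree_le) (use he_coeff in blast)
  show "n \<le> degree (hermite_He n)" by (rule le_degree) (use he_coeff[of n n] in simp)
qed

lemma he_lead: "lead_coeff (hermite_He n) = 1"
  using he_coeff[of n n] by (simp add: he_degree)

lemma he_poly0_odd: "odd n \<Longrightarrow> poly (hermite_He n) 0 = 0"
  using he_coeff[of n 0] by (simp add: poly_0_coeff_0)

lemma he_poly0_even: assumes "even n" shows "poly (hermite_He n) 0 \<noteq> 0"
proof
  assume "poly (hermite_He n) 0 = 0"
  then have c0: "coeff (hermite_He n) 0 = 0" by (simp add: poly_0_coeff_0)
  have "coeff (hermite_He n) (2*s) = 0" for s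
  proof (induction s)
    case 0 then show ?case using c0 by simp
  next
    case (Suc s)
    have "real (2*s+2) * real (2*s+1) * coeff (hermite_He n) (2*s+2) = (real (2*s) - real n) * coeff (hermite_He n) (2*s)"
      by (rule he_coeff_rec)
    then show ?case using Suc by simp
  qed
  then have "coeff (hermite_He n) n = 0" using assms by (metis evenE)
  then show False using he_coeff[of n n] by simp
qed

lemma he_rolle:
  assumes ab: "a < b" "poly (hermite_He n) a = 0" "poly (hermite_He n) b = 0"
  shows "\<exists>t. a < t \<and> t < b \<and> poly (hermite_He (Suc n)) t = 0"
proof -
  define f where "f = hermite_He n"
  define G where "G = (\<lambda>x. poly f x * exp (- (x^2) / 2))"
  have "G a = G b" using ab unfolding G_def f_def by simp
  moreover have "continuous_on {a..b} G" unfolding G_def by (intro continuous_intros) auto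
  moreover have der: "DERIV G x :> (- poly (hermite_He (Suc n)) x) * exp (- (x^2) / 2)" for x
    unfolding G_def f_def he_rec[of n]
    by (auto intro!: derivative_eq_intros simp: algebra_simps)
  moreover have "G differentiable (at x)" for x
    using der[of x] unfolding differentiable_def has_field_derivative_def by blast
  ultimately obtain z where z: "a < z" "z < b" "DERIV G z :> 0" using Rolle[OF ab(1)] by blast
  have "DERIV G z :> (- poly (hermite_He (Suc n)) z) * exp (- (z^2) / 2)" by (rule der)
  then have "(- poly (hermite_He (Suc n)) z) * exp (- (z^2) / 2) = 0"
    using DERIV_unique[OF _ z(3)] by blast
  then show ?thesis using z by auto
qed

lemma he_extra_root:
  assumes x0: "poly (hermite_He n) x0 = 0"
  shows "\<exists>t. (\<forall>x. poly (hermite_He n) x = 0 \<longrightarrow> x \<le> t) \<and> poly (hermite_He (Suc n)) t = 0"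
proof -
  define f where "f = hermite_He n"
  define R where "R = {x. poly f x = 0}"
  have fR: "finite R" unfolding R_def f_def by (rule poly_roots_finite) (rule he_ne0)
  have Rne: "R \<noteq> {}" using x0 unfolding R_def f_def by auto
  define L where "L = Max R"
  have LR: "L \<in> R" unfolding L_def using fR Rne by (rule Max_in)
  have Lmax: "x \<le> L" if "poly f x = 0" for x unfolding L_def using fR that unfolding R_def by simp
  obtain B where B: "\<forall>x\<ge>B. poly f x \<ge> lead_coeff f" using poly_pinfty_gt_lc[of f] by (auto simp: f_def he_lead)
  have pos: "poly f y > 0" if "y > L" for y
  proof (rule ccontr)
    assume "\<not> poly f y > 0"
    moreover have "poly f y \<noteq> 0" using Lmax that by force
    ultimately have neg: "poly f y < 0" by simp
    define b where "b = max B (y+1)"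
    have "poly f b \<ge> 1" using B unfolding b_def by (auto simp: f_def he_lead)
    moreover have "y < b" unfolding b_def by simp
    ultimately obtain x where "y < x" "x < b" "poly f x = 0" using poly_IVT_pos[of y b f] neg by auto
    then show False using Lmax that by force
  qed
  have d: "poly (pderiv f) L \<ge> 0"
  proof (rule ccontr)
    assume "\<not> poly (pderiv f) L \<ge> 0"
    then have "poly (pderiv f) L < 0" by simp
    then obtain d where d: "d > 0" "\<forall>h>0. h < d \<longrightarrow> poly f L > poly f (L + h)"
      using DERIV_neg_dec_right[OF poly_DERIV[of f L]] by blast
    then have "poly f L > poly f (L + d/2)" by simp
    moreover have "poly f (L + d/2) > 0" using pos d by simp
    ultimately show False using LR unfolding R_def by simp
  qed
  define g where "g = hermite_He (Suc n)"
  have gL: "poly g L \<le> 0" unfolding g_def he_rec[of n] using LR d unfolding R_def f_def by simp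
  show ?thesis
  proof (cases "poly g L = 0")
    case True
    then show ?thesis using Lmax unfolding g_def f_def by blast
  next
    case False
    then have gneg: "poly g L < 0" using gL by simp
    obtain B' where B': "\<forall>x\<ge>B'. poly g x \<ge> lead_coeff g" using poly_pinfty_gt_lc[of g] by (auto simp: g_def he_lead)
    define b where "b = max B' (L+1)"
    have "poly g b \<ge> 1" using B' unfolding b_def by (auto simp: g_def he_lead)
    moreover have "L < b" unfolding b_def by simp
    ultimately obtain t where t: "L < t" "t < b" "poly g t = 0" using poly_IVT_pos[of L b g] gneg by auto
    have "\<forall>x. poly (hermite_He n) x = 0 \<longrightarrow> x \<le> t" using Lmax t(1) unfolding f_def by force
    then show ?thesis using t(3) unfolding g_def by blast
  qed
qed

lemma he_pos_roots: "n div 2 \<le> card {x. 0 < x \<and> poly (hermite_He n) x = 0}"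
proof (induction n)
  case 0 then show ?case by simp
next
  case (Suc N)
  define S where "S = {x. 0 < x \<and> poly (hermite_He N) x = 0}"
  define S0 where "S0 = S \<union> (if odd N then {0} else {})"
  define G where "G = {x. 0 < x \<and> poly (hermite_He (Suc N)) x = 0}"
  have fS: "finite S" unfolding S_def
    using poly_roots_finite[OF he_ne0[of N]] by (rule rev_finite_subset) auto
  have fG: "finite G" unfolding G_def
    using poly_roots_finite[OF he_ne0[of "Suc N"]] by (rule rev_finite_subset) auto
  have fS0: "finite S0" unfolding S0_def using fS by simp
  have S0root: "x \<in> S0 \<Longrightarrow> poly (hermite_He N) x = 0 \<and> 0 \<le> x" for x
    unfolding S0_def S_def using he_poly0_odd[of N] by (auto split: if_splits)
  have cS0: "card S0 = card S + (if odd N then 1 else 0)"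
    unfolding S0_def using fS by (auto simp: S_def)
  have IH: "N div 2 \<le> card S" using Suc.IH unfolding S_def .
  show ?case
  proof (cases "S0 = {}")
    case True
    then have "card S = 0" "even N" unfolding S0_def by (auto split: if_splits)
    then show ?thesis using IH by presburger
  next
    case False
    have btw: "\<exists>t. a < t \<and> t < b \<and> poly (hermite_He (Suc N)) t = 0"
      if "a \<in> S0" "b \<in> S0" "a < b" for a b
      using he_rolle[of a b N] that S0root by blast
    obtain T where T: "finite T" "card T = card S0 - 1"
        "\<forall>t\<in>T. poly (hermite_He (Suc N)) t = 0 \<and> Min S0 < t \<and> t < Max S0"
      using rolle_count[OF fS0 False btw] by blast
    have MinS0: "0 \<le> Min S0" using Min_in[OF fS0 False] S0root by blast
    have MaxS0: "Max S0 \<in> S0" using Max_in[OF fS0 False] .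
    obtain t' where t': "\<forall>x. poly (hermite_He N) x = 0 \<longrightarrow> x \<le> t'" "poly (hermite_He (Suc N)) t' = 0"
      using he_extra_root[of N "Max S0"] S0root[OF MaxS0] by blast
    have t'ge: "Max S0 \<le> t'" using t'(1) S0root[OF MaxS0] by blast
    have t'T: "t' \<notin> T" using T(3) t'ge by force
    have t'pos: "0 < t'"
    proof (rule ccontr)
      assume "\<not> 0 < t'"
      then have "t' \<le> 0" by simp
      then have M0: "Max S0 = 0" using t'ge S0root[OF MaxS0] by linarith
      have "S = {}"
      proof (rule ccontr)
        assume "S \<noteq> {}"
        then obtain x where "x \<in> S" by blast
        then have "0 < x" "x \<in> S0" unfolding S_def S0_def by auto
        then show False using M0 Max_ge[OF fS0, of x] by simp
      qed
      then have "odd N" using False unfolding S0_def by (auto split: if_splits)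
      then have "poly (hermite_He (Suc N)) 0 \<noteq> 0" by (intro he_poly0_even) simp
      moreover have "t' = 0" using \<open>t' \<le> 0\<close> t'ge M0 by simp
      ultimately show False using t'(2) by simp
    qed
    have sub: "insert t' T \<subseteq> G" unfolding G_def using T(3) MinS0 t'pos t'(2) by force
    have "card (insert t' T) = card S0" using T t'T False fS0 by (simp add: card_gt_0_iff Suc_diff_1 del: card_0_eq)
    then have "card S0 \<le> card G" using card_mono[OF fG sub] by simp
    then show ?thesis using IH cS0 unfolding G_def by presburger
  qed
qed


lemma ev_pip_Suc: "ev (pip (Suc s)) g = opx (2*s+1) (ev (pip s) g)"
  by (rule poly_eqI) (simp add: coeff_ev coeff_opx poly_pip algebra_simps)

lemma ev_pip0: "ev (pip 0) g = g"
  by (rule poly_eqI) (simp add: coeff_ev pip_def)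

lemma coeff_Q: "coeff (ev (pip s) (hermite_He N)) m = poly (pip s) (real m) * coeff (hermite_He N) m"
  by (simp add: coeff_ev)

lemma Q_ne0: assumes "2*s \<le> N" shows "ev (pip s) (hermite_He N) \<noteq> 0"
proof -
  have "poly (pip s) (real N) \<noteq> 0" unfolding poly_pip using assms by (auto simp: prod_zero_iff)
  then have "coeff (ev (pip s) (hermite_He N)) N \<noteq> 0" using he_coeff[of N N] by (simp add: coeff_ev)
  then show ?thesis by auto
qed

lemma Q_lower: "s \<le> k \<Longrightarrow> 2*k \<le> N \<Longrightarrow> N div 2 - s \<le> card {x. 0 < x \<and> poly (ev (pip s) (hermite_He N)) x = 0}"
proof (induction s)
  case 0 then show ?case using he_pos_roots[of N] by (simp add: ev_pip0)
next
  case (Suc s)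
  have ne: "ev (pip s) (hermite_He N) \<noteq> 0" "opx (2*s+1) (ev (pip s) (hermite_He N)) \<noteq> 0"
    using Q_ne0[of s N] Q_ne0[of "Suc s" N] Suc.prems by (auto simp: ev_pip_Suc)
  have "card {x. 0 < x \<and> poly (ev (pip s) (hermite_He N)) x = 0}
      \<le> Suc (card {x. 0 < x \<and> poly (opx (2*s+1) (ev (pip s) (hermite_He N))) x = 0})"
    by (rule rolle_opx[OF ne])
  then show ?case using Suc by (simp add: ev_pip_Suc)
qed

lemma no_pos_roots:
  fixes p :: "real poly"
  assumes pos: "\<forall>s\<le>M. 0 < \<sigma> * coeff p (2*s)" and odd0: "\<forall>m. odd m \<longrightarrow> coeff p m = 0"
    and big: "\<forall>m>2*M. coeff p m = 0" and x: "0 < x"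
  shows "poly p x \<noteq> 0"
proof -
  have dp: "degree p < 2*M+1" using big by (metis degree_le le_imp_less_Suc Suc_eq_plus1)
  have "\<sigma> * poly p x = (\<Sum>l\<in>{0..<2*M+1}. \<sigma> * coeff p l * x ^ l)"
    unfolding poly_altdef_lt[OF dp] sum_distrib_left by (simp only: mult.assoc)
  also have "\<dots> = \<sigma> * coeff p 0 * x ^ 0 + (\<Sum>l\<in>{1..<2*M+1}. \<sigma> * coeff p l * x ^ l)"
    by (subst sum.atLeast_Suc_lessThan) auto
  also have "\<dots> > 0"
  proof -
    have "0 \<le> \<sigma> * coeff p l * x ^ l" if "l \<in> {1..<2*M+1}" for l
    proof (cases "odd l")
      case True then show ?thesis using odd0 by simp
    next
      case False
      then obtain s where "l = 2*s" by blast
      then have "0 < \<sigma> * coeff p l" using pos that by auto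
      then show ?thesis using x by simp
    qed
    then have "0 \<le> (\<Sum>l\<in>{1..<2*M+1}. \<sigma> * coeff p l * x ^ l)" by (rule sum_nonneg)
    moreover have "0 < \<sigma> * coeff p 0 * x ^ 0" using pos by auto
    ultimately show ?thesis by linarith
  qed
  finally show ?thesis by auto
qed

lemma desc_count:
  fixes p :: "real poly"
  assumes "j \<le> M" "\<forall>s\<le>M. 0 < (-1)^(s-j) * \<sigma> * coeff p (2*s)"
    "\<forall>m. odd m \<longrightarrow> coeff p m = 0" "\<forall>m>2*M. coeff p m = 0"
  shows "card {x. 0 < x \<and> poly p x = 0} \<le> M - j"
  using assms
proof (induction "M - j" arbitrary: j \<sigma> p)
  case 0
  then have jM: "j = M" by simp
  have "\<forall>s\<le>M. 0 < \<sigma> * coeff p (2*s)" using 0 jM by auto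
  then have e: "{x. 0 < x \<and> poly p x = 0} = {}" using no_pos_roots[of M \<sigma> p] 0 by blast
  show ?case by (simp only: e card.empty)
next
  case (Suc d)
  define p1 where "p1 = opx (2*j+1) p"
  have jM: "j + 1 \<le> M" using Suc by simp
  have c1: "coeff p1 m = (real m - real (2*j+1)) * coeff p m" for m unfolding p1_def by (rule coeff_opx)
  have h2: "\<forall>s\<le>M. 0 < (-1)^(s-(j+1)) * (-\<sigma>) * coeff p1 (2*s)"
  proof (intro allI impI)
    fix s assume sM: "s \<le> M"
    have hs: "0 < (-1)^(s-j) * \<sigma> * coeff p (2*s)" using Suc.prems(2) sM by blast
    consider "s \<le> j" | "s = j + 1" | "s > j + 1" by linarith
    then show "0 < (-1)^(s-(j+1)) * (-\<sigma>) * coeff p1 (2*s)"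
    proof cases
      case 1
      then have "s - j = 0" "s - (j+1) = 0" by auto
      then have "0 < \<sigma> * coeff p (2*s)" "real (2*s) - real (2*j+1) < 0" using hs 1 by auto
      then have A: "(real (2*s) - real (2*j+1)) * (\<sigma> * coeff p (2*s)) < 0" by (intro mult_neg_pos) auto
      have "(-1)^(s-(j+1)) * (-\<sigma>) * coeff p1 (2*s) = - ((real (2*s) - real (2*j+1)) * (\<sigma> * coeff p (2*s)))"
        unfolding c1 \<open>s - (j+1) = 0\<close> by (simp add: algebra_simps)
      then show ?thesis using A by linarith
    next
      case 2
      then have "0 < - (\<sigma> * coeff p (2*s))" using hs by simp
      then show ?thesis unfolding c1 using 2 by (simp add: algebra_simps)
    next
      case 3
      then have e: "s - j = Suc (s - (j+1))" by simp
      have "real (2*s) - real (2*j+1) > 0" using 3 by simp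
      moreover have "0 < (-1)^(s-(j+1)) * (-\<sigma>) * coeff p (2*s)" using hs unfolding e by simp
      ultimately have "0 < (real (2*s) - real (2*j+1)) * ((-1)^(s-(j+1)) * (-\<sigma>) * coeff p (2*s))"
        by (rule mult_pos_pos)
      moreover have "(-1)^(s-(j+1)) * (-\<sigma>) * coeff p1 (2*s) = (real (2*s) - real (2*j+1)) * ((-1)^(s-(j+1)) * (-\<sigma>) * coeff p (2*s))"
        unfolding c1 by (simp only: mult_ac)
      ultimately show ?thesis by metis
    qed
  qed
  have h3: "\<forall>m. odd m \<longrightarrow> coeff p1 m = 0" using Suc.prems(3) by (simp add: c1)
  have h4: "\<forall>m>2*M. coeff p1 m = 0" using Suc.prems(4) by (simp add: c1)
  have IH: "card {x. 0 < x \<and> poly p1 x = 0} \<le> M - (j+1)"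
    using Suc.hyps(1)[of "j+1" "-\<sigma>" p1] Suc.hyps(2) jM h2 h3 h4 by fastforce
  have ne: "p \<noteq> 0" "p1 \<noteq> 0"
  proof -
    have "0 < (-1)^(0-j) * \<sigma> * coeff p 0" using Suc.prems(2) by (metis le0 mult_0_right)
    then show "p \<noteq> 0" by auto
    have "0 < (-1)^(0-(j+1)) * (-\<sigma>) * coeff p1 0" using h2 by (metis le0 mult_0_right)
    then show "p1 \<noteq> 0" by auto
  qed
  have "card {x. 0 < x \<and> poly p x = 0} \<le> Suc (card {x. 0 < x \<and> poly p1 x = 0})"
    unfolding p1_def by (rule rolle_opx[OF ne[unfolded p1_def]])
  then show ?case using IH Suc.hyps(2) by linarith
qed

lemma pip_shift: "poly (pip k) (x+2) * (x + 1 - 2*real k) = (x+1) * poly (pip k) x"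
proof (induction k)
  case 0 then show ?case by (simp add: pip_def)
next
  case (Suc k)
  have "poly (pip (Suc k)) (x+2) * (x + 1 - 2*real (Suc k)) = (poly (pip k) (x+2) * (x + 1 - 2*real k)) * (x - 1 - 2*real k)"
    by (simp add: poly_pip algebra_simps)
  also have "\<dots> = (x+1) * poly (pip (Suc k)) x" unfolding Suc by (simp add: poly_pip algebra_simps)
  finally show ?case .
qed

lemma Q_rec: "(real m + 2) * (real m + 1 - 2*real k) * coeff (ev (pip k) (hermite_He N)) (m+2)
   = (real m - real N) * coeff (ev (pip k) (hermite_He N)) m"
proof -
  have "(real m + 2) * (real m + 1 - 2*real k) * coeff (ev (pip k) (hermite_He N)) (m+2)
      = (real m + 2) * (poly (pip k) (real m + 2) * (real m + 1 - 2*real k)) * coeff (hermite_He N) (m+2)"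
    by (simp add: coeff_ev algebra_simps)
  also have "\<dots> = poly (pip k) (real m) * (real (m+2) * real (m+1) * coeff (hermite_He N) (m+2))"
    unfolding pip_shift by (simp add: algebra_simps)
  also have "\<dots> = (real m - real N) * coeff (ev (pip k) (hermite_He N)) m"
    unfolding he_coeff_rec by (simp add: coeff_ev algebra_simps)
  finally show ?thesis .
qed

lemma Q_signs:
  assumes "even N" "1 \<le> k" "2*k \<le> N"
  shows "\<forall>s\<le>N div 2. 0 < (-1)^(s-k) * coeff (ev (pip k) (hermite_He N)) 0 * coeff (ev (pip k) (hermite_He N)) (2*s)"
proof -
  define q where "q = coeff (ev (pip k) (hermite_He N))"
  have q0: "q 0 \<noteq> 0"
  proof -
    have "poly (pip k) 0 \<noteq> 0" unfolding poly_pip by (auto simp: prod_zero_iff)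
    moreover have "coeff (hermite_He N) 0 \<noteq> 0" using he_poly0_even[OF assms(1)] by (simp add: poly_0_coeff_0)
    ultimately show ?thesis unfolding q_def by (simp add: coeff_ev)
  qed
  have "s \<le> N div 2 \<Longrightarrow> 0 < (-1)^(s-k) * q 0 * q (2*s)" for s
  proof (induction s)
    case 0 then show ?case using q0 by (simp add: zero_less_mult_iff) (metis linorder_neqE_linordered_idom)
  next
    case (Suc s)
    have IH: "0 < (-1)^(s-k) * q 0 * q (2*s)" using Suc by simp
    have r: "(real (2*s) + 2) * (real (2*s) + 1 - 2*real k) * q (2*s+2) = (real (2*s) - real N) * q (2*s)"
      unfolding q_def by (rule Q_rec)
    have B: "real (2*s) - real N < 0" using Suc.prems assms(1) by auto
    define A where "A = (real (2*s) + 2) * (real (2*s) + 1 - 2*real k)"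
    have r': "A * q (2*s+2) = (real (2*s) - real N) * q (2*s)" using r unfolding A_def by simp
    define c where "c = (-1::real)^(s-k) * q 0"
    have "A * (c * q (2*s+2)) = c * (A * q (2*s+2))" by (simp only: mult_ac)
    also have "\<dots> = c * ((real (2*s) - real N) * q (2*s))" unfolding r' ..
    also have "\<dots> = (real (2*s) - real N) * (c * q (2*s))" by (simp only: mult_ac)
    finally have key: "A * ((-1)^(s-k) * q 0 * q (2*s+2)) = (real (2*s) - real N) * ((-1)^(s-k) * q 0 * q (2*s))"
      unfolding c_def .
    have neg: "A * ((-1)^(s-k) * q 0 * q (2*s+2)) < 0" unfolding key using B IH by (rule mult_neg_pos)
    show ?case
    proof (cases "s < k")
      case True
      then have "A < 0" unfolding A_def by (intro mult_pos_neg) auto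
      then have "0 < (-1)^(s-k) * q 0 * q (2*s+2)" using neg by (simp add: mult_less_0_iff)
      moreover have "Suc s - k = s - k" using True by simp
      ultimately show ?thesis by simp
    next
      case False
      then have "A > 0" unfolding A_def by (intro mult_pos_pos) auto
      then have "(-1)^(s-k) * q 0 * q (2*s+2) < 0" using neg by (simp add: mult_less_0_iff)
      moreover have "Suc s - k = Suc (s - k)" using False by simp
      ultimately show ?thesis by simp
    qed
  qed
  then show ?thesis unfolding q_def by blast
qed

lemma Q_parity: "odd (N + m) \<Longrightarrow> coeff (ev (pip k) (hermite_He N)) m = 0"
  using he_coeff[of N m] by (simp add: coeff_ev)

lemma Q_big: "N < m \<Longrightarrow> coeff (ev (pip k) (hermite_He N)) m = 0"
  using he_coeff[of N m] by (simp add: coeff_ev)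

lemma Q_degree: "2*k \<le> N \<Longrightarrow> degree (ev (pip k) (hermite_He N)) = N"
proof (rule antisym)
  show "degree (ev (pip k) (hermite_He N)) \<le> N" by (rule degree_le) (use Q_big in blast)
  assume "2*k \<le> N"
  have "poly (pip k) (real N) \<noteq> 0" unfolding poly_pip using \<open>2*k \<le> N\<close> by (auto simp: prod_zero_iff)
  then show "N \<le> degree (ev (pip k) (hermite_He N))" by (intro le_degree) (use he_coeff[of N N] in \<open>simp add: coeff_ev\<close>)
qed

lemma Q_low: "1 \<le> k \<Longrightarrow> odd N \<Longrightarrow> m < 2*k+1 \<Longrightarrow> coeff (ev (pip k) (hermite_He N)) m = 0"
proof -
  assume k: "1 \<le> k" and N: "odd N" and m: "m < 2*k+1"
  show ?thesis
  proof (cases "even m")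
    case True then show ?thesis using N by (intro Q_parity) simp
  next
    case False
    define t where "t = m div 2"
    have t1: "m = 2*t+1" using False unfolding t_def by presburger
    have "t < k" using m t1 by linarith
    then have "poly (pip k) (real m) = 0" unfolding poly_pip t1 by (auto simp: prod_zero_iff)
    then show ?thesis by (simp add: coeff_ev)
  qed
qed


lemma ode_simple:
  fixes R :: "complex poly"
  assumes rec: "\<And>m. (of_nat m + 2) * (of_nat m + 1 - 2 * of_nat k) * coeff R (m+2) = (of_nat m - of_nat N) * coeff R m"
  and c1: "coeff R 1 = 0" and deg: "2 \<le> degree R" and z: "z \<noteq> 0" "poly R z = 0"
  shows "order z R = 1"
proof -
  have ode: "[:0,1:] * pderiv (pderiv R) = Polynomial.smult (2 * of_nat k) (pderiv R) + [:0,1:] * ([:0,1:] * pderiv R)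
     - Polynomial.smult (of_nat N) ([:0,1:] * R)"
  proof (rule poly_eqI)
    fix m
    show "coeff ([:0,1:] * pderiv (pderiv R)) m = coeff (Polynomial.smult (2 * of_nat k) (pderiv R) + [:0,1:] * ([:0,1:] * pderiv R)
     - Polynomial.smult (of_nat N) ([:0,1:] * R)) m"
    proof (cases m)
      case 0 then show ?thesis using c1 by (simp add: X_mult coeff_pderiv)
    next
      case (Suc t)
      have r: "(of_nat t + 2) * (of_nat t + 1 - 2 * of_nat k) * coeff R (t+2) = (of_nat t - of_nat N) * coeff R t" by (rule rec)
      show ?thesis
      proof (cases t)
        case 0 then show ?thesis using Suc r by (simp add: X_mult coeff_pderiv algebra_simps numeral_2_eq_2)
      next
        case (Suc u) then show ?thesis using \<open>m = Suc t\<close> r by (simp add: X_mult coeff_pderiv algebra_simps numeral_2_eq_2)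
      qed
    qed
  qed
  have R0: "R \<noteq> 0" using deg by auto
  define d where "d = order z R"
  have d1: "1 \<le> d" unfolding d_def using R0 z(2) by (simp add: order_root Suc_le_eq)
  show ?thesis
  proof (rule ccontr)
    assume "order z R \<noteq> 1"
    then have d2: "2 \<le> d" using d1 unfolding d_def by simp
    have R1: "pderiv R \<noteq> 0" using deg by (simp add: pderiv_eq_0_iff)
    have R2: "pderiv (pderiv R) \<noteq> 0" using deg by (simp add: pderiv_eq_0_iff degree_pderiv)
    have o1: "order z R = Suc (order z (pderiv R))" by (rule order_pderiv[OF R0 z(2)])
    have "poly (pderiv R) z = 0" using o1 d2 R1 unfolding d_def by (simp add: order_root)
    then have o2: "order z (pderiv R) = Suc (order z (pderiv (pderiv R)))" by (rule order_pderiv[OF R1])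
    have dv1: "[:-z,1:] ^ (d-1) dvd pderiv R" using o1 unfolding d_def by (simp add: order_divides)
    have dv0: "[:-z,1:] ^ (d-1) dvd R" unfolding d_def by (simp add: order_divides)
    have "[:-z,1:] ^ (d-1) dvd [:0,1:] * pderiv (pderiv R)" unfolding ode
      using dv1 dv0 by (intro dvd_diff dvd_add dvd_smult dvd_mult) auto
    then have "d - 1 \<le> order z ([:0,1:] * pderiv (pderiv R))" using R2 by (simp add: order_divides)
    also have "order z ([:0,1:] * pderiv (pderiv R)) = order z [:0,1:] + order z (pderiv (pderiv R))"
      using R2 by (intro order_mult) simp
    also have "order z [:0,1:] = 0" using z(1) by (intro order_0I) simp
    finally show False using o1 o2 d2 unfolding d_def by simp
  qed
qed


lemma poly_map_of_real: "poly (map_poly complex_of_real p) (of_real x) = of_real (poly p x)"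
  by (induction p) (auto simp: map_poly_pCons)

lemma map_monom_mult: "map_poly complex_of_real (monom c e * Q) = monom (of_real c) e * map_poly complex_of_real Q"
  by (rule poly_eqI) (simp add: coeff_map_poly coeff_monom_mult)

lemma monom_mult_roots:
  fixes Qc :: "complex poly"
  assumes "c \<noteq> 0" "z \<noteq> 0"
  shows "poly (monom c e * Qc) z = 0 \<longleftrightarrow> poly Qc z = 0"
  using assms by (simp add: poly_monom)

lemma monom_mult_order:
  fixes Qc :: "complex poly"
  assumes "c \<noteq> 0" "z \<noteq> 0" "Qc \<noteq> 0"
  shows "order z (monom c e * Qc) = order z Qc"
proof -
  have "order z (monom c e * Qc) = order z (monom c e) + order z Qc"
    using assms by (intro order_mult) (simp add: monom_eq_0_iff)
  moreover have "order z (monom c e) = 0" using assms by (intro order_0I) (simp add: poly_monom)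
  ultimately show ?thesis by simp
qed

lemma sum_order_complex:
  fixes p :: "complex poly"
  assumes "p \<noteq> 0"
  shows "(\<Sum>z\<in>{z. poly p z = 0}. order z p) = degree p"
proof -
  have "degree p = size (proots p)" by (simp add: size_proots_complex)
  also have "\<dots> = (\<Sum>z\<in>set_mset (proots p). count (proots p) z)" by (rule size_multiset_overloaded_eq)
  also have "\<dots> = (\<Sum>z\<in>{z. poly p z = 0}. order z p)" using assms by simp
  finally show ?thesis by simp
qed

lemma Q_sym: "poly (ev (pip k) (hermite_He N)) (-x) = (-1)^N * poly (ev (pip k) (hermite_He N)) x"
proof -
  define Q where "Q = ev (pip k) (hermite_He N)"
  have "poly Q (-x) = (\<Sum>i\<le>degree Q. coeff Q i * (-x) ^ i)" by (simp add: poly_altdef)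
  also have "\<dots> = (\<Sum>i\<le>degree Q. (-1)^N * (coeff Q i * x ^ i))"
  proof (intro sum.cong refl)
    fix i
    show "coeff Q i * (-x) ^ i = (-1)^N * (coeff Q i * x ^ i)"
    proof (cases "odd (N + i)")
      case True then show ?thesis unfolding Q_def using Q_parity by simp
    next
      case False
      then have "(-1::real)^i = (-1)^N" by (metis even_add neg_one_even_power neg_one_odd_power)
      then show ?thesis by (simp add: power_minus[of x] mult_ac)
    qed
  qed
  also have "\<dots> = (-1)^N * poly Q x" by (simp add: poly_altdef sum_distrib_left)
  finally show ?thesis unfolding Q_def .
qed

lemma Q_real_roots:
  fixes Q :: "real poly"
  assumes sym: "\<And>x. poly Q (-x) = (-1)^N * poly Q x" and Q0: "Q \<noteq> 0"
  shows "card {x. x \<noteq> 0 \<and> poly Q x = 0} = 2 * card {x. 0 < x \<and> poly Q x = 0}"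
    "finite {x. x \<noteq> 0 \<and> poly Q x = 0}"
proof -
  define S where "S = {x. 0 < x \<and> poly Q x = 0}"
  have fS: "finite S" unfolding S_def using poly_roots_finite[OF Q0] by (rule rev_finite_subset) auto
  have eq: "{x. x \<noteq> 0 \<and> poly Q x = 0} = S \<union> uminus ` S"
  proof (intro equalityI subsetI)
    fix x assume x: "x \<in> {x. x \<noteq> 0 \<and> poly Q x = 0}"
    show "x \<in> S \<union> uminus ` S"
    proof (cases "x > 0")
      case True then show ?thesis using x unfolding S_def by auto
    next
      case False
      then have "-x \<in> S" using x sym[of x] unfolding S_def by auto
      then show ?thesis by (auto intro: image_eqI[of x uminus "-x"])
    qed
  next
    fix x assume "x \<in> S \<union> uminus ` S"
    then show "x \<in> {x. x \<noteq> 0 \<and> poly Q x = 0}" unfolding S_def using sym by auto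
  qed
  have disj: "S \<inter> uminus ` S = {}" unfolding S_def by auto
  have "card (S \<union> uminus ` S) = card S + card (uminus ` S)" using fS disj by (intro card_Un_disjoint) auto
  also have "card (uminus ` S) = card S" by (rule card_image) (simp add: inj_on_def)
  finally show "card {x. x \<noteq> 0 \<and> poly Q x = 0} = 2 * card {x. 0 < x \<and> poly Q x = 0}"
    unfolding eq S_def[symmetric] by simp
  show "finite {x. x \<noteq> 0 \<and> poly Q x = 0}" unfolding eq using fS by simp
qed

lemma complex_real_roots:
  fixes Q :: "real poly"
  shows "{z. z \<in> \<real> \<and> z \<noteq> 0 \<and> poly (map_poly complex_of_real Q) z = 0} = of_real ` {x. x \<noteq> 0 \<and> poly Q x = 0}"
proof (intro equalityI subsetI)
  fix z assume z: "z \<in> {z. z \<in> \<real> \<and> z \<noteq> 0 \<and> poly (map_poly complex_of_real Q) z = 0}"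
  then obtain x where x: "z = of_real x" by (auto elim: Reals_cases)
  then show "z \<in> of_real ` {x. x \<noteq> 0 \<and> poly Q x = 0}" using z by (auto simp: poly_map_of_real)
next
  fix z :: complex assume "z \<in> of_real ` {x. x \<noteq> 0 \<and> poly Q x = 0}"
  then show "z \<in> {z. z \<in> \<real> \<and> z \<noteq> 0 \<and> poly (map_poly complex_of_real Q) z = 0}"
    by (auto simp: poly_map_of_real)
qed


theorem mainTheorem7:
  fixes n k :: nat
  assumes "1 \<le> k" and "k \<le> n"
  defines "P \<equiv> map_poly complex_of_real (hermite_partition (n # rev [1..<k+1]))"
  shows "(odd (n - k) \<longrightarrow>
            (\<forall>z. poly P z = 0 \<longrightarrow> z \<in> \<real>)
          \<and> (\<forall>z. z \<noteq> 0 \<and> poly P z = 0 \<longrightarrow> order z P = 1)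
          \<and> card {z. z \<noteq> 0 \<and> poly P z = 0} = n - k - 1)
       \<and> (even (n - k) \<longrightarrow>
            (\<forall>z. z \<noteq> 0 \<and> poly P z = 0 \<longrightarrow> order z P = 1)
          \<and> card {z. z \<noteq> 0 \<and> poly P z = 0 \<and> z \<in> \<real>} = n - k
          \<and> card {z. poly P z = 0 \<and> z \<notin> \<real>} = 2 * k)"
proof -
  define N where "N = n + k"
  have N2k: "2*k \<le> N" using assms unfolding N_def by simp
  have N2: "2 \<le> N" using assms unfolding N_def by simp
  define Q where "Q = ev (pip k) (hermite_He N)"
  obtain c e where c: "c \<noteq> 0" and hp: "hermite_partition (n # rev [1..<k+1]) = monom c e * Q"
    using hp_formula[OF assms(1,2)] unfolding Q_def N_def by blast
  define Qc where "Qc = map_poly complex_of_real Q"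
  have P: "P = monom (of_real c) e * Qc" unfolding P_def hp Qc_def by (rule map_monom_mult)
  have Q0: "Q \<noteq> 0" unfolding Q_def using Q_ne0[OF N2k] .
  have degQ: "degree Q = N" unfolding Q_def by (rule Q_degree[OF N2k])
  have coeffQc: "coeff Qc m = of_real (coeff Q m)" for m unfolding Qc_def by (simp add: coeff_map_poly)
  have degQc: "degree Qc = N" unfolding Qc_def using degQ by (subst degree_map_poly) auto
  have Qc0: "Qc \<noteq> 0" using degQc N2 by auto
  have cc: "complex_of_real c \<noteq> 0" using c by simp
  define Z where "Z = {z. poly Qc z = 0}"
  have fZ: "finite Z" unfolding Z_def by (rule poly_roots_finite[OF Qc0])
  have sumZ: "(\<Sum>z\<in>Z. order z Qc) = N" using sum_order_complex[OF Qc0] degQc unfolding Z_def by simp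
  have Proot: "poly P z = 0 \<longleftrightarrow> z \<in> Z" if "z \<noteq> 0" for z
    unfolding P Z_def using monom_mult_roots[OF cc that] by simp
  have Pord: "order z P = order z Qc" if "z \<noteq> 0" for z
    unfolding P using monom_mult_order[OF cc that Qc0] .
  have ordZ: "1 \<le> order z Qc" if "z \<in> Z" for z using that Qc0 unfolding Z_def
    by (simp add: order_root Suc_le_eq)
  define S where "S = {x. 0 < x \<and> poly Q x = 0}"
  have sym: "\<And>x. poly Q (-x) = (-1)^N * poly Q x" unfolding Q_def by (rule Q_sym)
  have RR: "card {x. x \<noteq> 0 \<and> poly Q x = 0} = 2 * card S" "finite {x. x \<noteq> 0 \<and> poly Q x = 0}"
    using Q_real_roots[OF sym Q0] unfolding S_def by auto
  define A where "A = {z. z \<in> \<real> \<and> z \<noteq> 0 \<and> poly Qc z = 0}"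
  have Aeq: "A = of_real ` {x. x \<noteq> 0 \<and> poly Q x = 0}" unfolding A_def Qc_def by (rule complex_real_roots)
  have cardA: "card A = 2 * card S" unfolding Aeq using RR by (subst card_image) (auto simp: inj_on_def)
  have AZ: "A \<subseteq> Z - {0}" unfolding A_def Z_def by auto
  have low: "N div 2 - k \<le> card S" unfolding S_def Q_def using Q_lower[of k k N] N2k by simp
  have oddcase: "(\<forall>z. poly P z = 0 \<longrightarrow> z \<in> \<real>)
          \<and> (\<forall>z. z \<noteq> 0 \<and> poly P z = 0 \<longrightarrow> order z P = 1)
          \<and> card {z. z \<noteq> 0 \<and> poly P z = 0} = n - k - 1" if odd: "odd (n - k)"
  proof -
    have oN: "odd N" using odd assms unfolding N_def by (metis add_diff_cancel_right' diff_add_inverse2 even_add le_add_diff_inverse2 mult_2 odd_add)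
    have "monom 1 (2*k+1) dvd Qc" unfolding monom_1_dvd_iff'
      using Q_low[OF assms(1) oN] by (simp add: coeffQc Q_def)
    then have o0: "2*k+1 \<le> order 0 Qc" using monom_1_dvd_iff[OF Qc0] by simp
    have Z0: "0 \<in> Z" unfolding Z_def using o0 by (simp add: order_root)
    define w where "w = (\<lambda>z::complex. if z = 0 then 2*k+1 else 1)"
    have ge: "\<forall>z\<in>Z. w z \<le> order z Qc" using o0 ordZ unfolding w_def by auto
    have sw: "(\<Sum>z\<in>Z. w z) = 2*k+1 + card (Z - {0})"
      using fZ Z0 by (simp add: sum.remove w_def)
    have "(\<Sum>z\<in>Z. w z) \<le> N" using sum_mono[of Z w "\<lambda>z. order z Qc"] ge sumZ by simp
    then have c1: "card (Z - {0}) \<le> N - (2*k+1)" using sw by simp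
    have c2: "N - (2*k+1) \<le> card A" using cardA low oN by presburger
    have c3: "card A \<le> card (Z - {0})" using AZ fZ by (intro card_mono) auto
    have AZeq: "A = Z - {0}" using AZ fZ c1 c2 c3 by (intro card_subset_eq) auto
    have cardZ0: "card (Z - {0}) = N - (2*k+1)" using c1 c2 c3 by simp
    have sweq: "(\<Sum>z\<in>Z. w z) = (\<Sum>z\<in>Z. order z Qc)" using sw cardZ0 sumZ N2k oN by presburger
    have ord1: "order z Qc = 1" if "z \<in> Z" "z \<noteq> 0" for z
    proof (rule ccontr)
      assume "order z Qc \<noteq> 1"
      then have "w z < order z Qc" using ordZ[OF that(1)] that(2) unfolding w_def by simp
      then have "(\<Sum>z\<in>Z. w z) < (\<Sum>z\<in>Z. order z Qc)"
        using fZ ge that(1) by (intro sum_strict_mono_ex1) auto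
      then show False using sweq by simp
    qed
    have g1: "\<forall>z. poly P z = 0 \<longrightarrow> z \<in> \<real>"
    proof (intro allI impI)
      fix z assume "poly P z = 0"
      show "z \<in> \<real>"
      proof (cases "z = 0")
        case False
        then have "z \<in> A" using AZeq Proot \<open>poly P z = 0\<close> by auto
        then show ?thesis unfolding A_def by simp
      qed simp
    qed
    have g2: "\<forall>z. z \<noteq> 0 \<and> poly P z = 0 \<longrightarrow> order z P = 1"
      using Proot Pord ord1 by auto
    have "{z. z \<noteq> 0 \<and> poly P z = 0} = Z - {0}" using Proot by auto
    then have g3: "card {z. z \<noteq> 0 \<and> poly P z = 0} = n - k - 1" using cardZ0 unfolding N_def by simp
    show ?thesis using g1 g2 g3 by blast
  qed
  have evencase: "(\<forall>z. z \<noteq> 0 \<and> poly P z = 0 \<longrightarrow> order z P = 1)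
          \<and> card {z. z \<noteq> 0 \<and> poly P z = 0 \<and> z \<in> \<real>} = n - k
          \<and> card {z. poly P z = 0 \<and> z \<notin> \<real>} = 2 * k" if ev: "even (n - k)"
  proof -
    have eN: "even N" using ev assms unfolding N_def by (metis add_diff_cancel_right' diff_add_inverse2 even_add le_add_diff_inverse2 mult_2 odd_add)
    have signs: "\<forall>s\<le>N div 2. 0 < (-1)^(s-k) * coeff Q 0 * coeff Q (2*s)"
      unfolding Q_def by (rule Q_signs[OF eN assms(1) N2k])
    have q0: "coeff Q 0 \<noteq> 0" using signs by fastforce
    have up: "card S \<le> N div 2 - k" unfolding S_def
    proof (rule desc_count[of k "N div 2" "coeff Q 0"])
      show "k \<le> N div 2" using N2k by simp
      show "\<forall>s\<le>N div 2. 0 < (-1)^(s-k) * coeff Q 0 * coeff Q (2*s)" by (rule signs)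
      show "\<forall>m. odd m \<longrightarrow> coeff Q m = 0" using eN unfolding Q_def by (auto intro: Q_parity)
      show "\<forall>m>2*(N div 2). coeff Q m = 0" using eN unfolding Q_def by (auto intro: Q_big)
    qed
    have cS: "card S = N div 2 - k" using up low by simp
    have Z0: "0 \<notin> Z"
    proof
      assume "0 \<in> Z"
      then have "poly Qc (of_real 0) = 0" unfolding Z_def by simp
      then have "poly Q 0 = 0" unfolding Qc_def poly_map_of_real by simp
      then show False using q0 by (simp add: poly_0_coeff_0)
    qed
    have ord1: "order z Qc = 1" if "z \<in> Z" for z
    proof (rule ode_simple[where k=k and N=N and R=Qc])
      fix m
      have "of_real ((real m + 2) * (real m + 1 - 2*real k) * coeff Q (m+2)) = (of_real ((real m - real N) * coeff Q m) :: complex)"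
        unfolding Q_def Q_rec ..
      then show "(of_nat m + 2) * (of_nat m + 1 - 2 * of_nat k) * coeff Qc (m+2) = (of_nat m - of_nat N) * coeff Qc m"
        by (simp add: coeffQc)
    next
      show "coeff Qc 1 = 0" using eN unfolding coeffQc Q_def by (simp add: Q_parity)
      show "2 \<le> degree Qc" using degQc N2 by simp
      show "z \<noteq> 0" using that Z0 by auto
      show "poly Qc z = 0" using that unfolding Z_def by simp
    qed
    have cardZ: "card Z = N" using sumZ ord1 by simp
    have AZ': "A \<subseteq> Z" using AZ by auto
    have cA: "card A = n - k" using cardA cS eN N2k unfolding N_def by presburger
    have g1: "\<forall>z. z \<noteq> 0 \<and> poly P z = 0 \<longrightarrow> order z P = 1" using Proot Pord ord1 by auto
    have "{z. z \<noteq> 0 \<and> poly P z = 0 \<and> z \<in> \<real>} = A" unfolding A_def using Proot Z_def by auto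
    then have g2: "card {z. z \<noteq> 0 \<and> poly P z = 0 \<and> z \<in> \<real>} = n - k" using cA by simp
    have "{z. poly P z = 0 \<and> z \<notin> \<real>} = Z - A"
    proof (intro equalityI subsetI)
      fix z assume "z \<in> {z. poly P z = 0 \<and> z \<notin> \<real>}"
      then have "z \<noteq> 0" "poly P z = 0" "z \<notin> \<real>" by auto
      then show "z \<in> Z - A" using Proot unfolding A_def by auto
    next
      fix z assume "z \<in> Z - A"
      then have "z \<noteq> 0" "z \<in> Z" "z \<notin> A" using Z0 by auto
      then show "z \<in> {z. poly P z = 0 \<and> z \<notin> \<real>}" using Proot unfolding A_def Z_def by auto
    qed
    then have g3: "card {z. poly P z = 0 \<and> z \<notin> \<real>} = 2 * k"
      using card_Diff_subset[OF finite_subset[OF AZ' fZ] AZ'] cardZ cA assms(2) unfolding N_def by simp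
    show ?thesis using g1 g2 g3 by blast
  qed
  show ?thesis using oddcase evencase by blast
qed


end
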